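(* Let $(X,d)$ be a compact metric space, $f_{0,\infty}=\{f_n\}_{n=0}^\infty$ a sequence of continuous self-maps of $X$, and $A=\{k^i\}_{i=1}^{\infty}$ for some integer $k\geq1$. Then \[h_{A}(f_{0,\infty}^{k^n})=h_{A}(f_{0,\infty}),\quad n\geq1.\]
   Context: $f_i^n=f_{i+n-1}\circ\cdots\circ f_i$ ($n\ge1$), $f_i^0=\mathrm{id}$, $f_i^{-n}(B)=(f_i^n)^{-1}(B)$. For $m\ge1$, the $m$-th compositions system is $f_{0,\infty}^m=\{f_{jm}^m\}_{j=0}^\infty$, i.e. the sequence of maps $f_{jm+m-1}\circ\cdots\circ f_{jm}$. For a sequence $g_{0,\infty}$ of continuous self-maps and a sequence $A=\{a_i\}$ of nonnegative integers, $h_A(g_{0,\infty})=\sup_{\mathscr A}\limsup_{m\to\infty}\frac1m\log\mathcal N(\bigvee_{i=1}^m g_0^{-a_i}\mathscr A)$ over finite open covers $\mathscr A$ of $X$, with $\bigvee$ the common refinement, $g_0^{-a}\mathscr A=\{(g_0^a)^{-1}U:U\in\mathscr A\}$, and $\mathcal N$ the minimal cardinality of a subcover. *)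

theory Defs
  imports "HOL-Analysis.Analysis"
begin

fun iter_from :: "(nat \<Rightarrow> 'a \<Rightarrow> 'a) \<Rightarrow> nat \<Rightarrow> nat \<Rightarrow> 'a \<Rightarrow> 'a" where
  "iter_from f i 0 = id"
| "iter_from f i (Suc n) = f (i + n) \<circ> iter_from f i n"

definition comp_system :: "(nat \<Rightarrow> 'a \<Rightarrow> 'a) \<Rightarrow> nat \<Rightarrow> nat \<Rightarrow> 'a \<Rightarrow> 'a" where
  "comp_system f m = (\<lambda>j. iter_from f (j * m) m)"

definition open_covers :: "'a::topological_space set \<Rightarrow> 'a set set set" where
  "open_covers X = {\<A>. finite \<A> \<and> (\<forall>U\<in>\<A>. openin (top_of_set X) U) \<and> \<Union>\<A> = X}"

definition preimage_cover :: "'a set \<Rightarrow> ('a \<Rightarrow> 'a) \<Rightarrow> 'a set set \<Rightarrow> 'a set set" where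
  "preimage_cover X g \<A> = (\<lambda>U. {x \<in> X. g x \<in> U}) ` \<A>"

definition join_covers :: "nat \<Rightarrow> (nat \<Rightarrow> 'a set set) \<Rightarrow> 'a set set" where
  "join_covers m C = {\<Inter>i\<in>{1..m}. U i | U. \<forall>i\<in>{1..m}. U i \<in> C i}"

definition cover_number :: "'a set \<Rightarrow> 'a set set \<Rightarrow> nat" where
  "cover_number X \<C> = Inf {card \<B> | \<B>. \<B> \<subseteq> \<C> \<and> finite \<B> \<and> X \<subseteq> \<Union>\<B>}"

definition seq_entropy :: "'a::topological_space set \<Rightarrow> (nat \<Rightarrow> nat) \<Rightarrow> (nat \<Rightarrow> 'a \<Rightarrow> 'a) \<Rightarrow> ereal" where
  "seq_entropy X a g = (SUP \<A>\<in>open_covers X.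
      limsup (\<lambda>m. ereal (ln (real (cover_number X
        (join_covers m (\<lambda>i. preimage_cover X (iter_from g 0 (a i)) \<A>)))) / real m)))"

end

theory Submission imports Defs begin

lemma limsup_diff0:
  fixes x y :: "nat \<Rightarrow> real"
  assumes "(\<lambda>M. x M - y M) \<longlonglongrightarrow> 0"
  shows "limsup (\<lambda>M. ereal (x M)) = limsup (\<lambda>M. ereal (y M))"
proof -
  have "(\<lambda>M. ereal (x M - y M)) \<longlonglongrightarrow> ereal 0" using assms by (intro tendsto_ereal)
  hence "limsup (\<lambda>M. ereal (x M - y M) + ereal (y M)) = ereal 0 + limsup (\<lambda>M. ereal (y M))"
    by (intro ereal_limsup_lim_add) auto
  thus ?thesis by simp
qed

lemma sandwich0:
  fixes d :: "nat \<Rightarrow> real"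
  assumes "\<And>M. M \<ge> 1 \<Longrightarrow> 0 \<le> d M \<and> d M \<le> K / real M"
  shows "d \<longlonglongrightarrow> 0"
proof (rule tendsto_sandwich[of "\<lambda>_. 0" _ _ "\<lambda>M. K / real M"])
  show "\<forall>\<^sub>F M in sequentially. 0 \<le> d M" using assms eventually_sequentially by blast
  show "\<forall>\<^sub>F M in sequentially. d M \<le> K / real M" using assms eventually_sequentially by blast
  show "(\<lambda>M. K / real M) \<longlonglongrightarrow> 0" by (rule lim_const_over_n)
qed simp

lemma limsup_real_main:
  fixes a b :: "nat \<Rightarrow> real" and n :: nat
  assumes b0: "\<And>M. 0 \<le> b M" and ba: "\<And>M. b M \<le> a (M + n)" and ab: "\<And>M. a (M + n) \<le> b M + c"
    and aL: "\<And>M. a M \<le> real M * L" and L0: "L \<ge> 0"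
  shows "limsup (\<lambda>M. ereal (b M / real M)) = limsup (\<lambda>M. ereal (a M / real M))"
proof -
  have s: "limsup (\<lambda>M. ereal (a M / real M)) = limsup (\<lambda>M. ereal (a (M+n) / real (M+n)))"
    using limsup_shift_k[of "\<lambda>M. ereal (a M / real M)" n] by simp
  have 1: "(\<lambda>M. a (M+n) / real M - a (M+n) / real (M+n)) \<longlonglongrightarrow> 0"
  proof (rule sandwich0[where K = "real n * L"])
    fix M :: nat assume M: "M \<ge> 1"
    have e: "a (M+n) / real M - a (M+n) / real (M+n) = a (M+n) * real n / (real M * real (M+n))"
      using M by (simp add: field_simps)
    have a0: "a (M+n) \<ge> 0" using b0[of M] ba[of M] by linarith
    have "a (M+n) * real n \<le> (real (M+n) * L) * real n"
      using aL[of "M+n"] by (intro mult_right_mono) auto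
    hence "a (M+n) * real n / (real M * real (M+n)) \<le> (real (M+n) * L) * real n / (real M * real (M+n))"
      using M by (intro divide_right_mono) auto
    also have "\<dots> = (real (M+n) * (real n * L)) / (real (M+n) * real M)" by (simp add: ac_simps)
    also have "\<dots> = real n * L / real M" using M by simp
    finally show "0 \<le> a (M+n) / real M - a (M+n) / real (M+n) \<and>
        a (M+n) / real M - a (M+n) / real (M+n) \<le> real n * L / real M"
      using e a0 M by simp
  qed
  have 2: "(\<lambda>M. a (M+n) / real M - b M / real M) \<longlonglongrightarrow> 0"
  proof (rule sandwich0[where K = c])
    fix M :: nat assume M: "M \<ge> 1"
    have e: "a (M+n) / real M - b M / real M = (a (M+n) - b M) / real M"
      by (simp add: diff_divide_distrib)
    show "0 \<le> a (M+n) / real M - b M / real M \<and> a (M+n) / real M - b M / real M \<le> c / real M"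
      unfolding e using ba[of M] ab[of M] M by (auto intro: divide_right_mono divide_nonneg_pos)
  qed
  have "limsup (\<lambda>M. ereal (a (M+n) / real M)) = limsup (\<lambda>M. ereal (a (M+n) / real (M+n)))"
    using limsup_diff0[OF 1] .
  moreover have "limsup (\<lambda>M. ereal (a (M+n) / real M)) = limsup (\<lambda>M. ereal (b M / real M))"
    using limsup_diff0[OF 2] .
  ultimately show ?thesis using s by simp
qed


definition joinI :: "nat set \<Rightarrow> (nat \<Rightarrow> 'a set set) \<Rightarrow> 'a set set" where
  "joinI I C = {\<Inter>i\<in>I. U i | U. \<forall>i\<in>I. U i \<in> C i}"

lemma join_covers_eq: "join_covers m C = joinI {1..m} C"
  by (simp add: join_covers_def joinI_def)

lemma cn_mem:
  assumes "finite D" "X \<subseteq> \<Union>D"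
  shows "\<exists>B\<subseteq>D. finite B \<and> X \<subseteq> \<Union>B \<and> card B = cover_number X D"
proof -
  let ?S = "{card \<B> | \<B>. \<B> \<subseteq> D \<and> finite \<B> \<and> X \<subseteq> \<Union>\<B>}"
  have "card D \<in> ?S" using assms by auto
  hence "?S \<noteq> {}" by auto
  hence "Inf ?S \<in> ?S" by (rule Inf_nat_def1)
  then obtain B where B: "B \<subseteq> D" "finite B" "X \<subseteq> \<Union>B" "card B = Inf ?S" by auto
  have "cover_number X D = Inf ?S" unfolding cover_number_def by (rule refl)
  thus ?thesis using B by auto
qed

lemma cn_le:
  assumes "B \<subseteq> D" "finite B" "X \<subseteq> \<Union>B"
  shows "cover_number X D \<le> card B"
  unfolding cover_number_def using assms by (auto intro!: cInf_lower)

lemma refine: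
  assumes "\<forall>W\<in>D. \<exists>V\<in>C. W \<subseteq> V" "finite D" "X \<subseteq> \<Union>D"
  shows "cover_number X C \<le> cover_number X D"
proof -
  obtain B where B: "B \<subseteq> D" "finite B" "X \<subseteq> \<Union>B" "card B = cover_number X D"
    using cn_mem[OF assms(2,3)] by blast
  define g where "g W = (SOME V. V \<in> C \<and> W \<subseteq> V)" for W
  have g: "g W \<in> C \<and> W \<subseteq> g W" if "W \<in> B" for W
  proof -
    have "\<exists>V. V \<in> C \<and> W \<subseteq> V" using assms(1) B(1) that by blast
    thus ?thesis unfolding g_def by (rule someI_ex)
  qed
  have "cover_number X C \<le> card (g ` B)"
  proof (rule cn_le)
    show "g ` B \<subseteq> C" using g by blast
    show "finite (g ` B)" using B by simp
    show "X \<subseteq> \<Union> (g ` B)" using B(3) g by blast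
  qed
  also have "\<dots> \<le> card B" by (rule card_image_le) (use B in simp)
  also have "\<dots> = cover_number X D" using B(4) .
  finally show ?thesis .
qed

lemma joinI_covers:
  assumes "\<forall>i\<in>I. X \<subseteq> \<Union>(C i)"
  shows "X \<subseteq> \<Union>(joinI I C)"
proof
  fix x assume x: "x \<in> X"
  define U where "U i = (SOME V. V \<in> C i \<and> x \<in> V)" for i
  have U: "U i \<in> C i \<and> x \<in> U i" if "i \<in> I" for i
  proof -
    have "\<exists>V. V \<in> C i \<and> x \<in> V" using assms x that by blast
    thus ?thesis unfolding U_def by (rule someI_ex)
  qed
  have "(\<Inter>i\<in>I. U i) \<in> joinI I C" unfolding joinI_def using U by blast
  moreover have "x \<in> (\<Inter>i\<in>I. U i)" using U by blast
  ultimately show "x \<in> \<Union>(joinI I C)" by blast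
qed

lemma joinI_finite_card:
  assumes "finite I" "\<forall>i\<in>I. finite (C i)"
  shows "finite (joinI I C) \<and> card (joinI I C) \<le> (\<Prod>i\<in>I. card (C i))"
proof -
  have sub: "joinI I C \<subseteq> (\<lambda>U. \<Inter>i\<in>I. U i) ` PiE I C"
  proof
    fix W assume "W \<in> joinI I C"
    then obtain U where U: "W = (\<Inter>i\<in>I. U i)" "\<forall>i\<in>I. U i \<in> C i" unfolding joinI_def by blast
    have "restrict U I \<in> PiE I C" using U(2) by auto
    moreover have "W = (\<Inter>i\<in>I. restrict U I i)" using U(1) by simp
    ultimately show "W \<in> (\<lambda>U. \<Inter>i\<in>I. U i) ` PiE I C" by blast
  qed
  have fin: "finite (PiE I C)" using assms by (simp add: finite_PiE)
  have "finite (joinI I C)" using sub fin finite_subset by blast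
  moreover have "card (joinI I C) \<le> card ((\<lambda>U. \<Inter>i\<in>I. U i) ` PiE I C)"
    using sub fin by (intro card_mono) auto
  moreover have "card ((\<lambda>U. \<Inter>i\<in>I. U i) ` PiE I C) \<le> card (PiE I C)"
    using fin by (rule card_image_le)
  moreover have "card (PiE I C) = (\<Prod>i\<in>I. card (C i))" using assms by (simp add: card_PiE)
  ultimately show ?thesis by linarith
qed

lemma cn_mono:
  assumes "I \<subseteq> J" "finite J" "\<forall>i\<in>J. X \<subseteq> \<Union>(C i)" "\<forall>i\<in>J. finite (C i)"
  shows "cover_number X (joinI I C) \<le> cover_number X (joinI J C)"
proof (rule refine)
  show "finite (joinI J C)" using joinI_finite_card assms by blast
  show "X \<subseteq> \<Union> (joinI J C)" using joinI_covers assms by blast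
  show "\<forall>W\<in>joinI J C. \<exists>V\<in>joinI I C. W \<subseteq> V"
  proof
    fix W assume "W \<in> joinI J C"
    then obtain U where U: "W = (\<Inter>i\<in>J. U i)" "\<forall>i\<in>J. U i \<in> C i" unfolding joinI_def by blast
    have "(\<Inter>i\<in>I. U i) \<in> joinI I C" using U(2) assms(1) unfolding joinI_def by blast
    moreover have "W \<subseteq> (\<Inter>i\<in>I. U i)" using U(1) assms(1) by blast
    ultimately show "\<exists>V\<in>joinI I C. W \<subseteq> V" by blast
  qed
qed

lemma cn_submult:
  assumes "I \<inter> J = {}" "finite I" "finite J" "\<forall>i\<in>I\<union>J. X \<subseteq> \<Union>(C i)" "\<forall>i\<in>I\<union>J. finite (C i)"
  shows "cover_number X (joinI (I \<union> J) C) \<le> cover_number X (joinI I C) * cover_number X (joinI J C)"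
proof -
  obtain B1 where B1: "B1 \<subseteq> joinI I C" "finite B1" "X \<subseteq> \<Union>B1" "card B1 = cover_number X (joinI I C)"
    using cn_mem[of "joinI I C" X] joinI_finite_card[of I C] joinI_covers[of I X C] assms by auto
  obtain B2 where B2: "B2 \<subseteq> joinI J C" "finite B2" "X \<subseteq> \<Union>B2" "card B2 = cover_number X (joinI J C)"
    using cn_mem[of "joinI J C" X] joinI_finite_card[of J C] joinI_covers[of J X C] assms by auto
  let ?B = "(\<lambda>(P, Q). P \<inter> Q) ` (B1 \<times> B2)"
  have "cover_number X (joinI (I \<union> J) C) \<le> card ?B"
  proof (rule cn_le)
    show "finite ?B" using B1 B2 by simp
    show "X \<subseteq> \<Union> ?B"
    proof
      fix x assume "x \<in> X"
      then obtain P Q where "P \<in> B1" "Q \<in> B2" "x \<in> P" "x \<in> Q" using B1 B2 by blast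
      thus "x \<in> \<Union> ?B" by blast
    qed
    have key: "P \<inter> Q \<in> joinI (I \<union> J) C" if PQ: "P \<in> B1" "Q \<in> B2" for P Q
    proof -
      obtain U where U: "P = (\<Inter>i\<in>I. U i)" "\<forall>i\<in>I. U i \<in> C i"
        using PQ B1 unfolding joinI_def by blast
      obtain V where V: "Q = (\<Inter>i\<in>J. V i)" "\<forall>i\<in>J. V i \<in> C i"
        using PQ B2 unfolding joinI_def by blast
      define W where "W i = (if i \<in> I then U i else V i)" for i
      have eI: "(\<Inter>i\<in>I. W i) = P" using U by (simp add: W_def)
      have "(\<Inter>i\<in>J. W i) = (\<Inter>i\<in>J. V i)" using assms(1) by (intro INF_cong) (auto simp: W_def)
      hence eJ: "(\<Inter>i\<in>J. W i) = Q" using V(1) by simp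
      have "P \<inter> Q = (\<Inter>i\<in>I\<union>J. W i)" using eI eJ by (simp add: INF_union)
      moreover have "\<forall>i\<in>I\<union>J. W i \<in> C i" using U V by (auto simp: W_def)
      ultimately show ?thesis
        unfolding joinI_def by auto
    qed
    show "?B \<subseteq> joinI (I \<union> J) C" using key by auto
  qed
  also have "\<dots> \<le> card (B1 \<times> B2)" by (rule card_image_le) (use B1 B2 in simp)
  also have "\<dots> = card B1 * card B2" by (simp add: card_cartesian_product)
  finally show ?thesis using B1 B2 by simp
qed

lemma joinI_shift:
  "joinI I (\<lambda>i. C (i + n)) = joinI ((\<lambda>i. i + n) ` I) C"
proof
  show "joinI I (\<lambda>i. C (i + n)) \<subseteq> joinI ((\<lambda>i. i + n) ` I) C"
  proof
    fix W assume "W \<in> joinI I (\<lambda>i. C (i + n))"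
    then obtain U where U: "W = (\<Inter>i\<in>I. U i)" "\<forall>i\<in>I. U i \<in> C (i + n)" unfolding joinI_def by blast
    define V where "V j = U (j - n)" for j
    have "(\<Inter>j\<in>(\<lambda>i. i + n) ` I. V j) = (\<Inter>i\<in>I. V (i + n))" by (simp only: image_image)
    also have "\<dots> = (\<Inter>i\<in>I. U i)" unfolding V_def by simp
    finally have "W = (\<Inter>j\<in>(\<lambda>i. i + n) ` I. V j)" using U(1) by simp
    moreover have "\<forall>j\<in>(\<lambda>i. i + n) ` I. V j \<in> C j" using U(2) unfolding V_def by auto
    ultimately show "W \<in> joinI ((\<lambda>i. i + n) ` I) C" unfolding joinI_def by blast
  qed
  show "joinI ((\<lambda>i. i + n) ` I) C \<subseteq> joinI I (\<lambda>i. C (i + n))"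
  proof
    fix W assume "W \<in> joinI ((\<lambda>i. i + n) ` I) C"
    then obtain V where V: "W = (\<Inter>j\<in>(\<lambda>i. i + n) ` I. V j)" "\<forall>j\<in>(\<lambda>i. i + n) ` I. V j \<in> C j"
      unfolding joinI_def by blast
    have "W = (\<Inter>i\<in>I. V (i + n))" using V(1) by (simp only: image_image)
    moreover have "\<forall>i\<in>I. V (i + n) \<in> C (i + n)" using V(2) by blast
    ultimately show "W \<in> joinI I (\<lambda>i. C (i + n))" unfolding joinI_def by blast
  qed
qed

lemma iter_add: "iter_from f i (p + q) = iter_from f (i + p) q \<circ> iter_from f i p"
  by (induction q) (auto simp: add.assoc)

lemma iter_comp_system: "iter_from (comp_system f m) 0 a = iter_from f 0 (a * m)"
proof (induction a)
  case (Suc a)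
  have "iter_from f 0 (Suc a * m) = iter_from f (a * m) m \<circ> iter_from f 0 (a * m)"
    using iter_add[of f 0 "a * m" m] by (simp add: add.commute)
  thus ?case using Suc by (simp add: comp_system_def)
qed simp

lemma iter_maps: assumes "\<And>i. f i ` X \<subseteq> X" shows "iter_from f i p ` X \<subseteq> X"
  by (induction p) (use assms in \<open>auto simp: image_subset_iff\<close>)

lemma ln_nat_nonneg: "ln (real (N::nat)) \<ge> 0"
  by (cases N) auto

lemma ln_nat_mono: "(N1::nat) \<le> N2 \<Longrightarrow> ln (real N1) \<le> ln (real N2)"
  by (cases "N1 = 0") (auto simp: ln_nat_nonneg)

lemma ln_nat_pow: assumes "(N::nat) \<le> q ^ M" shows "ln (real N) \<le> real M * ln (real q)"
proof (cases "N = 0")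
  case True thus ?thesis using ln_nat_nonneg[of q] by simp
next
  case False
  show ?thesis
  proof (cases "q = 0")
    case True
    hence "M = 0" using assms False by (cases M) auto
    thus ?thesis using assms True ln_nat_mono[of N 1] by simp
  next
    case False
    have "ln (real N) \<le> ln (real (q ^ M))" using assms by (rule ln_nat_mono)
    also have "\<dots> = real M * ln (real q)" using False by (simp add: ln_realpow)
    finally show ?thesis .
  qed
qed


theorem proposition4p2:
  fixes X :: "'a::metric_space set" and f :: "nat \<Rightarrow> 'a \<Rightarrow> 'a" and k n :: nat
  assumes "compact X"
    and "\<And>i. continuous_on X (f i)"
    and "\<And>i. f i ` X \<subseteq> X"
    and "k \<ge> 1"
    and "n \<ge> 1"
  shows "seq_entropy X (\<lambda>i. k ^ i) (comp_system f (k ^ n)) = seq_entropy X (\<lambda>i. k ^ i) f"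
proof -
  have eq: "limsup (\<lambda>m. ereal (ln (real (cover_number X (join_covers m
        (\<lambda>i. preimage_cover X (iter_from (comp_system f (k ^ n)) 0 (k ^ i)) \<A>)))) / real m))
    = limsup (\<lambda>m. ereal (ln (real (cover_number X (join_covers m
        (\<lambda>i. preimage_cover X (iter_from f 0 (k ^ i)) \<A>)))) / real m))"
    if A: "\<A> \<in> open_covers X" for \<A>
  proof -
    have Afin: "finite \<A>" and AU: "\<Union>\<A> = X" using A by (auto simp: open_covers_def)
    define C where "C i = preimage_cover X (iter_from f 0 (k ^ i)) \<A>" for i
    have Cfin: "finite (C i)" for i using Afin by (simp add: C_def preimage_cover_def)
    have Ccard: "card (C i) \<le> card \<A>" for i
      unfolding C_def preimage_cover_def using Afin by (rule card_image_le)
    have Ccov: "X \<subseteq> \<Union>(C i)" for i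
    proof
      fix x assume x: "x \<in> X"
      hence "iter_from f 0 (k ^ i) x \<in> X" using iter_maps[of f X, OF assms(3)] by blast
      then obtain U where U: "U \<in> \<A>" "iter_from f 0 (k ^ i) x \<in> U" using AU by blast
      hence "x \<in> {y \<in> X. iter_from f 0 (k ^ i) y \<in> U}" using x by blast
      thus "x \<in> \<Union>(C i)" using U unfolding C_def preimage_cover_def by blast
    qed
    have gC: "(\<lambda>i. preimage_cover X (iter_from (comp_system f (k ^ n)) 0 (k ^ i)) \<A>) = (\<lambda>i. C (i + n))"
      by (simp add: iter_comp_system C_def power_add)
    define a where "a M = ln (real (cover_number X (joinI {1..M} C)))" for M
    define b where "b M = ln (real (cover_number X (joinI {1..M} (\<lambda>i. C (i + n)))))" for M
    define K where "K = max 1 (cover_number X (joinI {1..n} C))"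
    have himg: "(\<lambda>i. i + n) ` {1..M} = {1 + n..M + n}" for M by simp
    have bN: "cover_number X (joinI {1..M} (\<lambda>i. C (i + n))) = cover_number X (joinI {1 + n..M + n} C)" for M
      using joinI_shift[of "{1..M}" C n] himg by simp
    have "limsup (\<lambda>M. ereal (b M / real M)) = limsup (\<lambda>M. ereal (a M / real M))"
    proof (rule limsup_real_main[where n = n and c = "ln (real K)" and L = "ln (real (card \<A>))"])
      show "0 \<le> b M" for M unfolding b_def by (rule ln_nat_nonneg)
      show "0 \<le> ln (real (card \<A>))" by (rule ln_nat_nonneg)
      show "b M \<le> a (M + n)" for M
        unfolding a_def b_def bN
        by (intro ln_nat_mono cn_mono) (auto simp: Cfin Ccov)
      show "a (M + n) \<le> b M + ln (real K)" for M
      proof -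
        have U: "{1..M + n} = {1..n} \<union> {1 + n..M + n}" by auto
        have "cover_number X (joinI {1..M + n} C) \<le>
            cover_number X (joinI {1..n} C) * cover_number X (joinI {1 + n..M + n} C)"
          unfolding U by (rule cn_submult) (auto simp: Cfin Ccov)
        also have "\<dots> \<le> K * cover_number X (joinI {1 + n..M + n} C)"
          unfolding K_def by (intro mult_right_mono) auto
        finally have le: "cover_number X (joinI {1..M + n} C) \<le> K * cover_number X (joinI {1 + n..M + n} C)" .
        have K1: "K \<ge> 1" unfolding K_def by simp
        show ?thesis
        proof (cases "cover_number X (joinI {1 + n..M + n} C) = 0")
          case True
          thus ?thesis using le unfolding a_def b_def bN using ln_nat_nonneg[of K] by simp
        next
          case False
          have "a (M + n) \<le> ln (real (K * cover_number X (joinI {1 + n..M + n} C)))"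
            unfolding a_def by (rule ln_nat_mono[OF le])
          also have "\<dots> = ln (real K) + b M"
            unfolding b_def bN using False K1 by (simp add: ln_mult)
          finally show ?thesis by simp
        qed
      qed
      show "a M \<le> real M * ln (real (card \<A>))" for M
      proof -
        have "cover_number X (joinI {1..M} C) \<le> card (joinI {1..M} C)"
          using joinI_finite_card[of "{1..M}" C] joinI_covers[of "{1..M}" X C] Cfin Ccov
          by (intro cn_le) auto
        also have "\<dots> \<le> (\<Prod>i\<in>{1..M}. card (C i))"
          using joinI_finite_card[of "{1..M}" C] Cfin by auto
        also have "\<dots> \<le> (\<Prod>i\<in>{1..M}. card \<A>)" by (intro prod_mono) (auto simp: Ccard)
        also have "\<dots> = card \<A> ^ M" by simp
        finally show ?thesis unfolding a_def by (rule ln_nat_pow)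
      qed
    qed
    moreover have "a M = ln (real (cover_number X (join_covers M (\<lambda>i. preimage_cover X (iter_from f 0 (k ^ i)) \<A>))))" for M
    proof -
      have Ceq: "C = (\<lambda>i. preimage_cover X (iter_from f 0 (k ^ i)) \<A>)" by (rule ext) (simp only: C_def)
      show ?thesis by (simp only: a_def join_covers_eq Ceq)
    qed
    moreover have "b M = ln (real (cover_number X (join_covers M (\<lambda>i. preimage_cover X (iter_from (comp_system f (k ^ n)) 0 (k ^ i)) \<A>))))" for M
      by (simp only: b_def join_covers_eq gC)
    ultimately show ?thesis by (simp only:)
  qed
  show ?thesis unfolding seq_entropy_def by (rule SUP_cong[OF refl]) (rule eq)
qed

end
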